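(* Assume Hypothesis (H). Let $\mathfrak k$ be a Lie subalgebra of $\mathfrak g$ with $\mathfrak h\subsetneq\mathfrak k$, let $\mathfrak k_1,\dots,\mathfrak k_r$ ($r\ge1$) be all the maximal Lie subalgebras of $\mathfrak k$ containing $\mathfrak h$ as a proper subset, and put $\mathfrak l_i=\mathfrak k\ominus\mathfrak k_i$. Let $\Theta(\mathfrak k)$ be the class of $\mathrm{Ad}(H)$-invariant proper subspaces $\mathfrak u\subsetneq\mathfrak k\ominus\mathfrak h$ with $\mathfrak u\cap\mathfrak l_i\neq\{0\}$ for every $i=1,\dots,r$. Define $\theta=\inf\{\langle\mathfrak u\mathfrak u\mathfrak q\rangle:\mathfrak u\in\Theta(\mathfrak k),\ \mathfrak q=\mathfrak k\ominus(\mathfrak u\oplus\mathfrak h)\}$ if $\Theta(\mathfrak k)\ne\emptyset$, and $\theta=1$ otherwise. Then $\theta>0$.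
   Context: Let $G$ be a compact connected Lie group with Lie algebra $\mathfrak g$ and $H<G$ a closed connected subgroup with Lie algebra $\mathfrak h$; $M=G/H$, $\dim M\ge3$. Fix an $\mathrm{Ad}(G)$-invariant inner product $Q$ on $\mathfrak g$; $\mathfrak v\ominus\mathfrak u$ is the $Q$-orthogonal complement, $\pi_{\mathfrak u}$ the $Q$-orthogonal projection, $\oplus$ the $Q$-orthogonal sum; $\mathfrak m=\mathfrak g\ominus\mathfrak h$. For $\mathrm{Ad}(H)$-invariant $\mathfrak u,\mathfrak v,\mathfrak w\subset\mathfrak m$, $\langle\mathfrak u\mathfrak v\mathfrak w\rangle=\sum_{a,b}Q(\pi_{\mathfrak u}[e_a,f_b],\pi_{\mathfrak u}[e_a,f_b])$ with $(e_a),(f_b)$ $Q$-orthonormal bases of $\mathfrak v,\mathfrak w$ ($0$ if a space is zero). Hypothesis (H): every Lie subalgebra $\mathfrak s\subset\mathfrak g$ with $\mathfrak h\subsetneq\mathfrak s$ satisfies (1) for all nonzero $\mathrm{Ad}(H)$-invariant subspaces $\mathfrak u\subset\mathfrak s\ominus\mathfrak h$ and $\mathfrak v\subset\mathfrak g\ominus\mathfrak s$, the representations $\mathrm{Ad}(H)|_{\mathfrak u}$ and $\mathrm{Ad}(H)|_{\mathfrak v}$ are inequivalent; (2) $[\mathfrak r,\mathfrak s]\neq\{0\}$ for every $\mathrm{Ad}(H)$-invariant one-dimensional subspace $\mathfrak r\subset\mathfrak g\ominus\mathfrak s$. *)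

theory Defs
  imports "HOL-Analysis.Analysis"
begin

text \<open>The Lie algebra g is modelled as a finite-dimensional real inner product space
  'g (type class euclidean_space), whose inner product plays the role of Q, together
  with a bracket br.\<close>

definition compact_lie_algebra :: "('g::euclidean_space \<Rightarrow> 'g \<Rightarrow> 'g) \<Rightarrow> bool" where
  "compact_lie_algebra br \<longleftrightarrow>
     (\<forall>x. linear (br x)) \<and> (\<forall>y. linear (\<lambda>x. br x y)) \<and>
     (\<forall>x y. br x y = - br y x) \<and>
     (\<forall>x y z. br x (br y z) + br y (br z x) + br z (br x y) = 0) \<and>
     (\<forall>x y z. inner (br x y) z = - inner y (br x z))"
  (* the last condition: Q is ad-invariant (infinitesimal form of Ad(G)-invariance) *)

definition lie_subalgebra :: "('g::euclidean_space \<Rightarrow> 'g \<Rightarrow> 'g) \<Rightarrow> 'g set \<Rightarrow> bool" where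
  "lie_subalgebra br s \<longleftrightarrow> subspace s \<and> (\<forall>x\<in>s. \<forall>y\<in>s. br x y \<in> s)"

definition ominus :: "'g::euclidean_space set \<Rightarrow> 'g set \<Rightarrow> 'g set" where
  "ominus v u = {x\<in>v. \<forall>y\<in>u. inner x y = 0}"

text \<open>Q-orthogonal sum  u \<oplus> w  (used only for mutually orthogonal subspaces).\<close>
definition osum :: "'g::euclidean_space set \<Rightarrow> 'g set \<Rightarrow> 'g set" where
  "osum u w = {x + y | x y. x \<in> u \<and> y \<in> w}"

definition proj :: "'g::euclidean_space set \<Rightarrow> 'g \<Rightarrow> 'g" where
  "proj u x = (THE p. p \<in> u \<and> (\<forall>y\<in>u. inner (x - p) y = 0))"

definition orthonormal_basis :: "'g::euclidean_space set \<Rightarrow> 'g set \<Rightarrow> bool" where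
  "orthonormal_basis B V \<longleftrightarrow> finite B \<and> B \<subseteq> V \<and> span B = V \<and>
     pairwise orthogonal B \<and> (\<forall>b\<in>B. norm b = 1)"

text \<open>The bracket  <u v w>  (independent of the choice of orthonormal bases;
  it is 0 when v or w is zero since the bases are then empty).\<close>
definition triple :: "('g::euclidean_space \<Rightarrow> 'g \<Rightarrow> 'g) \<Rightarrow> 'g set \<Rightarrow> 'g set \<Rightarrow> 'g set \<Rightarrow> real" where
  "triple br u v w =
     (\<Sum>e\<in>(SOME B. orthonormal_basis B v). \<Sum>f\<in>(SOME C. orthonormal_basis C w).
        inner (proj u (br e f)) (proj u (br e f)))"

text \<open>Ad(H)-invariance, H connected with Lie algebra h, i.e. ad(h)-invariance.\<close>
definition invariant :: "('g::euclidean_space \<Rightarrow> 'g \<Rightarrow> 'g) \<Rightarrow> 'g set \<Rightarrow> 'g set \<Rightarrow> bool" where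
  "invariant br h u \<longleftrightarrow> subspace u \<and> (\<forall>x\<in>h. \<forall>y\<in>u. br x y \<in> u)"

text \<open>Equivalence of the representations of H (equivalently of h, H connected) on u and v.\<close>
definition equivalent_reps :: "('g::euclidean_space \<Rightarrow> 'g \<Rightarrow> 'g) \<Rightarrow> 'g set \<Rightarrow> 'g set \<Rightarrow> 'g set \<Rightarrow> bool" where
  "equivalent_reps br h u v \<longleftrightarrow>
     (\<exists>T. linear T \<and> bij_betw T u v \<and> (\<forall>x\<in>h. \<forall>y\<in>u. T (br x y) = br x (T y)))"

definition hypothesis_H :: "('g::euclidean_space \<Rightarrow> 'g \<Rightarrow> 'g) \<Rightarrow> 'g set \<Rightarrow> bool" where
  "hypothesis_H br h \<longleftrightarrow>
     (\<forall>s. lie_subalgebra br s \<and> h \<subset> s \<longrightarrow>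
        (\<forall>u v. invariant br h u \<and> u \<noteq> {0} \<and> u \<subseteq> ominus s h \<and>
               invariant br h v \<and> v \<noteq> {0} \<and> v \<subseteq> ominus UNIV s \<longrightarrow>
               \<not> equivalent_reps br h u v) \<and>
        (\<forall>r. invariant br h r \<and> dim r = 1 \<and> r \<subseteq> ominus UNIV s \<longrightarrow>
               (\<exists>x\<in>r. \<exists>y\<in>s. br x y \<noteq> 0)))"

definition max_subalgebras :: "('g::euclidean_space \<Rightarrow> 'g \<Rightarrow> 'g) \<Rightarrow> 'g set \<Rightarrow> 'g set \<Rightarrow> 'g set set" where
  "max_subalgebras br h k = {s. lie_subalgebra br s \<and> s \<subset> k \<and> h \<subset> s \<and>
      (\<forall>t. lie_subalgebra br t \<and> s \<subseteq> t \<and> t \<subset> k \<longrightarrow> t = s)}"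

definition Theta :: "('g::euclidean_space \<Rightarrow> 'g \<Rightarrow> 'g) \<Rightarrow> 'g set \<Rightarrow> 'g set \<Rightarrow> 'g set set" where
  "Theta br h k = {u. invariant br h u \<and> u \<subset> ominus k h \<and>
      (\<forall>s\<in>max_subalgebras br h k. u \<inter> ominus k s \<noteq> {0})}"

definition theta :: "('g::euclidean_space \<Rightarrow> 'g \<Rightarrow> 'g) \<Rightarrow> 'g set \<Rightarrow> 'g set \<Rightarrow> real" where
  "theta br h k = (if Theta br h k = {} then 1
     else Inf {triple br u u (ominus k (osum u h)) | u. u \<in> Theta br h k})"

end

theory Submission
  imports Defs
begin

definition onf :: "(nat \<Rightarrow> 'g::euclidean_space) \<Rightarrow> nat \<Rightarrow> bool" where
  "onf x N \<longleftrightarrow> (\<forall>i<N. \<forall>j<N. i \<noteq> j \<longrightarrow> inner (x i) (x j) = 0) \<and>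
     (\<forall>i<N. inner (x i) (x i) * (inner (x i) (x i) - 1) = 0)"

lemma proj_unique:
  fixes S :: "'g::euclidean_space set"
  assumes "subspace S" "p \<in> S" "\<forall>z\<in>S. inner (y - p) z = 0"
  shows "proj S y = p"
  unfolding proj_def
proof (rule the_equality)
  show "p \<in> S \<and> (\<forall>z\<in>S. inner (y - p) z = 0)" using assms by auto
next
  fix p' assume p': "p' \<in> S \<and> (\<forall>z\<in>S. inner (y - p') z = 0)"
  have d: "p - p' \<in> S" using assms p' by (simp add: subspace_diff)
  have "inner (p - p') (p - p') = inner (y - p') (p - p') - inner (y - p) (p - p')"
    by (simp add: inner_diff_left algebra_simps)
  also have "\<dots> = 0" using d assms p' by simp
  finally show "p' = p" by simp
qed

lemma onf_orth:
  fixes x :: "nat \<Rightarrow> 'g::euclidean_space"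
  assumes "onf x N" "z \<in> span (x ` {..<N})"
  shows "inner (y - (\<Sum>k<N. inner y (x k) *\<^sub>R x k)) z = 0"
proof -
  let ?p = "(\<Sum>k<N. inner y (x k) *\<^sub>R x k)"
  have gen: "inner (y - ?p) (x j) = 0" if j: "j < N" for j
  proof -
    have "inner ?p (x j) = (\<Sum>k<N. inner y (x k) * inner (x k) (x j))"
      by (simp add: inner_sum_left)
    also have "\<dots> = (\<Sum>k\<in>{j}. inner y (x k) * inner (x k) (x j))"
      using assms j unfolding onf_def by (intro sum.mono_neutral_right) auto
    also have "\<dots> = inner y (x j) * inner (x j) (x j)" by simp
    finally have e: "inner ?p (x j) = inner y (x j) * inner (x j) (x j)" .
    have "inner (x j) (x j) = 0 \<or> inner (x j) (x j) = 1" using assms j unfolding onf_def by auto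
    then show ?thesis
    proof
      assume "inner (x j) (x j) = 0" then have "x j = 0" by simp
      then show ?thesis by simp
    next
      assume "inner (x j) (x j) = 1" then show ?thesis using e by (simp add: inner_diff_left)
    qed
  qed
  have "orthogonal (y - ?p) z"
    by (rule orthogonal_to_span[OF assms(2)]) (auto simp: orthogonal_def gen)
  then show ?thesis by (simp add: orthogonal_def)
qed

lemma onf_proj:
  fixes x :: "nat \<Rightarrow> 'g::euclidean_space"
  assumes "onf x N"
  shows "proj (span (x ` {..<N})) y = (\<Sum>k<N. inner y (x k) *\<^sub>R x k)"
proof (rule proj_unique)
  show "subspace (span (x ` {..<N}))" by simp
  show "(\<Sum>k<N. inner y (x k) *\<^sub>R x k) \<in> span (x ` {..<N})"
    by (intro span_sum span_scale span_base) auto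
  show "\<forall>z\<in>span (x ` {..<N}). inner (y - (\<Sum>k<N. inner y (x k) *\<^sub>R x k)) z = 0"
    using onf_orth[OF assms] by blast
qed

lemma onb_exists:
  fixes S :: "'g::euclidean_space set"
  assumes "subspace S"
  shows "\<exists>B. orthonormal_basis B S"
proof -
  obtain B where B: "B \<subseteq> S" "pairwise orthogonal B" "\<And>x. x \<in> B \<Longrightarrow> norm x = 1"
              "independent B" "card B = dim S" "span B = S"
    using orthonormal_basis_subspace[OF assms] by blast
  have fin: "finite B" using independent_bound[OF B(4)] by auto
  have "orthonormal_basis B S" unfolding orthonormal_basis_def using B fin by simp
  then show ?thesis by blast
qed

lemma onb_frame:
  fixes S :: "'g::euclidean_space set"
  assumes ob: "orthonormal_basis B S"
  shows "\<exists>x. onf x DIM('g) \<and> x ` {..<DIM('g)} \<subseteq> insert 0 B \<and> B \<subseteq> x ` {..<DIM('g)}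
     \<and> span (x ` {..<DIM('g)}) = S"
proof -
  have B: "finite B" "B \<subseteq> S" "span B = S" "pairwise orthogonal B" "\<And>b. b\<in>B \<Longrightarrow> norm b = 1"
    using ob unfolding orthonormal_basis_def by auto
  have "0 \<notin> B"
  proof
    assume "0 \<in> B" then have "norm (0::'g) = 1" using B(5) by blast
    then show False by simp
  qed
  then have "independent B" using B(4) pairwise_orthogonal_independent by blast
  then have cB: "card B \<le> DIM('g)" using independent_bound[of B] by simp
  obtain g where g: "bij_betw g {0..<card B} B" using ex_bij_betw_nat_finite[OF B(1)] by blast
  define x where "x = (\<lambda>i. if i < card B then g i else 0)"
  have xin: "x i \<in> insert 0 B" for i using bij_betw_apply[OF g] unfolding x_def by auto
  have "onf x DIM('g)" unfolding onf_def
  proof (intro conjI allI impI)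
    fix i j assume "i < DIM('g)" "j < DIM('g)" "i \<noteq> j"
    show "inner (x i) (x j) = 0"
    proof (cases "i < card B \<and> j < card B")
      case True
      have "g i \<noteq> g j" using inj_on_contraD[OF bij_betw_imp_inj_on[OF g] \<open>i \<noteq> j\<close>] True by simp
      moreover have "g i \<in> B" "g j \<in> B" using bij_betw_apply[OF g] True by auto
      ultimately
      have "inner (g i) (g j) = 0" using B(4) unfolding pairwise_def orthogonal_def by blast
      then show ?thesis using True unfolding x_def by simp
    next
      case False then show ?thesis unfolding x_def by auto
    qed
  next
    fix i assume "i < DIM('g)"
    have "x i = 0 \<or> norm (x i) = 1" using xin[of i] B(5) by auto
    moreover have "norm (x i) = 1 \<Longrightarrow> inner (x i) (x i) = 1"
      by (metis norm_eq_1)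
    ultimately show "inner (x i) (x i) * (inner (x i) (x i) - 1) = 0" by auto
  qed
  moreover have sub: "x ` {..<DIM('g)} \<subseteq> insert 0 B" using xin by auto
  moreover have sup: "B \<subseteq> x ` {..<DIM('g)}"
  proof
    fix b assume "b \<in> B"
    then have "b \<in> g ` {0..<card B}" using bij_betw_imp_surj_on[OF g] by simp
    then obtain i where "i < card B" "g i = b" by auto
    then show "b \<in> x ` {..<DIM('g)}" using cB unfolding x_def by (intro image_eqI[of _ _ i]) auto
  qed
  moreover have "span (x ` {..<DIM('g)}) = S"
  proof
    show "span (x ` {..<DIM('g)}) \<subseteq> S" using span_mono[OF sub] B(3) by simp
    show "S \<subseteq> span (x ` {..<DIM('g)})" using span_mono[OF sup] B(3) by simp
  qed
  ultimately show ?thesis by (intro exI[of _ x]) simp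
qed

lemma subspace_ominus: "subspace v \<Longrightarrow> subspace (ominus v u)"
  unfolding subspace_def ominus_def by (auto simp: inner_add_left)

lemma ominus_sub: "ominus v u \<subseteq> v" unfolding ominus_def by auto

lemma proj_facts:
  fixes S :: "'g::euclidean_space set"
  assumes "subspace S"
  shows "proj S y \<in> S" "\<And>z. z \<in> S \<Longrightarrow> inner (y - proj S y) z = 0"
proof -
  obtain B where B: "orthonormal_basis B S" using onb_exists[OF assms] by blast
  obtain x where x: "onf x DIM('g)" "span (x ` {..<DIM('g)}) = S" using onb_frame[OF B] by blast
  have p: "proj S y = (\<Sum>k<DIM('g). inner y (x k) *\<^sub>R x k)" using onf_proj[OF x(1)] x(2) by simp
  have "(\<Sum>k<DIM('g). inner y (x k) *\<^sub>R x k) \<in> span (x ` {..<DIM('g)})"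
    by (intro span_sum span_scale span_base) auto
  then show "proj S y \<in> S" using p x(2) by simp
  fix z assume "z \<in> S"
  show "inner (y - proj S y) z = 0" unfolding p using onf_orth[OF x(1)] x(2) \<open>z \<in> S\<close> by blast
qed

lemma proj_id:
  fixes S :: "'g::euclidean_space set"
  assumes "subspace S" "z \<in> S" shows "proj S z = z"
  using proj_unique[OF assms(1) assms(2)] by simp

lemma proj_zero:
  fixes S :: "'g::euclidean_space set"
  assumes "subspace S" shows "proj S 0 = 0"
  using proj_id[OF assms subspace_0[OF assms]] .

lemma osum_subspace: "subspace u \<Longrightarrow> subspace h \<Longrightarrow> subspace (osum u h)"
  unfolding osum_def by (rule subspace_sums)

lemma proj_q:
  fixes k h u :: "'g::euclidean_space set"
  assumes k: "subspace k" and h: "subspace h" and u: "subspace u" and hk: "h \<subseteq> k"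
    and uk: "u \<subseteq> ominus k h" and y: "y \<in> k"
  shows "proj (ominus k (osum u h)) y = y - proj u y - proj h y"
proof (rule proj_unique)
  show "subspace (ominus k (osum u h))" using subspace_ominus[OF k] .
  have pu: "proj u y \<in> u" "proj h y \<in> h" using proj_facts u h by auto
  have uk': "u \<subseteq> k" using uk ominus_sub by blast
  have uh: "inner a b = 0" if "a \<in> u" "b \<in> h" for a b using uk that unfolding ominus_def by auto
  have ink: "y - proj u y - proj h y \<in> k"
    using pu uk' hk y k by (meson subsetD subspace_diff)
  have ou: "inner (y - proj u y - proj h y) a = 0" if "a \<in> u" for a
  proof -
    have "inner (y - proj u y) a = 0" using proj_facts(2)[OF u that] .
    moreover have "inner (proj h y) a = 0" using uh[OF that pu(2)] by (simp add: inner_commute)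
    ultimately show ?thesis by (simp add: inner_diff_left)
  qed
  have oh: "inner (y - proj u y - proj h y) b = 0" if "b \<in> h" for b
  proof -
    have "inner (y - proj h y) b = 0" using proj_facts(2)[OF h that] .
    moreover have "inner (proj u y) b = 0" using uh[OF pu(1) that] .
    ultimately show ?thesis by (simp add: inner_diff_left algebra_simps)
  qed
  show "y - proj u y - proj h y \<in> ominus k (osum u h)"
    unfolding ominus_def osum_def using ink ou oh by (auto simp: inner_add_right)
  show "\<forall>z\<in>ominus k (osum u h). inner (y - (y - proj u y - proj h y)) z = 0"
  proof
    fix z assume "z \<in> ominus k (osum u h)"
    then have "inner z (proj u y + proj h y) = 0" using pu unfolding ominus_def osum_def by blast
    then show "inner (y - (y - proj u y - proj h y)) z = 0" by (simp add: inner_commute add.commute)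
  qed
qed

lemma onb_proj:
  fixes G :: "'g::euclidean_space set"
  assumes ob: "orthonormal_basis G U"
  shows "proj U y = (\<Sum>g\<in>G. inner y g *\<^sub>R g)"
proof -
  have G: "finite G" "G \<subseteq> U" "span G = U" "pairwise orthogonal G" "\<And>b. b\<in>G \<Longrightarrow> norm b = 1"
    using ob unfolding orthonormal_basis_def by auto
  let ?p = "(\<Sum>g\<in>G. inner y g *\<^sub>R g)"
  have gen: "orthogonal (y - ?p) g'" if g': "g' \<in> G" for g'
  proof -
    have "inner ?p g' = (\<Sum>g\<in>G. inner y g * inner g g')" by (simp add: inner_sum_left)
    also have "\<dots> = (\<Sum>g\<in>{g'}. inner y g * inner g g')"
    proof (rule sum.mono_neutral_right)
      show "finite G" by (rule G(1))
      show "{g'} \<subseteq> G" using g' by simp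
      show "\<forall>i\<in>G - {g'}. inner y i * inner i g' = 0"
        using G(4) g' unfolding pairwise_def orthogonal_def by auto
    qed
    also have "\<dots> = inner y g'" using G(5)[OF g'] by (simp add: norm_eq_1)
    finally show ?thesis by (simp add: orthogonal_def inner_diff_left)
  qed
  show ?thesis
  proof (rule proj_unique)
    show "subspace U" unfolding G(3)[symmetric] by (rule subspace_span)
    have "?p \<in> span G" by (intro span_sum span_scale span_base)
    then show "?p \<in> U" using G(3) by simp
    show "\<forall>z\<in>U. inner (y - ?p) z = 0"
    proof
      fix z assume "z \<in> U"
      then have "z \<in> span G" using G(3) by simp
      then have "orthogonal (y - ?p) z" by (rule orthogonal_to_span) (rule gen)
      then show "inner (y - ?p) z = 0" by (simp add: orthogonal_def)
    qed
  qed
qed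

lemma onb_parseval:
  fixes G :: "'g::euclidean_space set"
  assumes ob: "orthonormal_basis G U"
  shows "inner (proj U y) (proj U y) = (\<Sum>g\<in>G. (inner y g)^2)"
proof -
  have "span G = U" using ob unfolding orthonormal_basis_def by blast
  then have U: "subspace U" by (metis subspace_span)
  have "inner (y - proj U y) (proj U y) = 0" using proj_facts[OF U] by blast
  then have "inner y (proj U y) - inner (proj U y) (proj U y) = 0"
    by (simp add: inner_diff_left)
  then have "inner (proj U y) (proj U y) = inner (proj U y) y"
    by (simp add: inner_commute)
  also have "\<dots> = (\<Sum>g\<in>G. inner y g * inner g y)"
    unfolding onb_proj[OF ob] by (simp add: inner_sum_left)
  also have "\<dots> = (\<Sum>g\<in>G. (inner y g)^2)" by (simp add: inner_commute power2_eq_square)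
  finally show ?thesis .
qed

lemma triple_sym:
  fixes br :: "'g::euclidean_space \<Rightarrow> 'g \<Rightarrow> 'g"
  assumes cl: "compact_lie_algebra br" and us: "subspace u" and qs: "subspace q"
  shows "triple br u u q = (\<Sum>a\<in>(SOME B. orthonormal_basis B u). \<Sum>b\<in>(SOME B. orthonormal_basis B u).
            inner (proj q (br a b)) (proj q (br a b)))"
proof -
  define B where "B = (SOME B. orthonormal_basis B u)"
  define C where "C = (SOME C. orthonormal_basis C q)"
  have obB: "orthonormal_basis B u" unfolding B_def using onb_exists[OF us] by (rule someI_ex)
  have obC: "orthonormal_basis C q" unfolding C_def using onb_exists[OF qs] by (rule someI_ex)
  have adinv: "inner (br x y) z = - inner y (br x z)" for x y z
    using cl unfolding compact_lie_algebra_def by blast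
  have "triple br u u q = (\<Sum>e\<in>B. \<Sum>f\<in>C. inner (proj u (br e f)) (proj u (br e f)))"
    unfolding triple_def B_def C_def ..
  also have "\<dots> = (\<Sum>e\<in>B. \<Sum>f\<in>C. \<Sum>g\<in>B. (inner (br e f) g)^2)"
    by (simp add: onb_parseval[OF obB])
  also have "\<dots> = (\<Sum>e\<in>B. \<Sum>f\<in>C. \<Sum>g\<in>B. (inner (br e g) f)^2)"
  proof -
    have "(inner (br e f) g)^2 = (inner (br e g) f)^2" for e f g
      using adinv[of e f g] by (simp add: inner_commute)
    then show ?thesis by simp
  qed
  also have "\<dots> = (\<Sum>e\<in>B. \<Sum>g\<in>B. \<Sum>f\<in>C. (inner (br e g) f)^2)"
    by (simp add: sum.swap[where A = C])
  also have "\<dots> = (\<Sum>e\<in>B. \<Sum>g\<in>B. inner (proj q (br e g)) (proj q (br e g)))"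
    by (simp add: onb_parseval[OF obC])
  finally show ?thesis unfolding B_def .
qed

definition PS :: "(nat \<Rightarrow> 'g::euclidean_space) \<Rightarrow> 'g \<Rightarrow> 'g" where
  "PS x y = (\<Sum>k<DIM('g). inner y (x k) *\<^sub>R x k)"

definition good :: "('g::euclidean_space \<Rightarrow> 'g \<Rightarrow> 'g) \<Rightarrow> 'g set \<Rightarrow> 'g set \<Rightarrow> (nat \<Rightarrow> 'g set)
   \<Rightarrow> nat \<Rightarrow> (nat \<Rightarrow> 'g) \<Rightarrow> (nat \<Rightarrow> 'g) \<Rightarrow> real \<Rightarrow> bool" where
  "good br h k tt m hb x \<epsilon> \<longleftrightarrow> onf x DIM('g) \<and>
     (\<forall>i<DIM('g). x i \<in> k \<and> (\<forall>a\<in>h. inner (x i) a = 0)) \<and>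
     (\<forall>i<DIM('g). \<forall>a\<in>h. br a (x i) = PS x (br a (x i))) \<and>
     (\<forall>i<DIM('g). \<forall>j<DIM('g). norm (br (x i) (x j) - PS x (br (x i) (x j)) - PS hb (br (x i) (x j)))^2 \<le> \<epsilon>) \<and>
     (\<forall>c<m. norm (x (DIM('g)+c)) = 1 \<and> x (DIM('g)+c) \<in> k \<and> (\<forall>a\<in>tt c. inner (x (DIM('g)+c)) a = 0)
        \<and> x (DIM('g)+c) = PS x (x (DIM('g)+c))) \<and>
     norm (x (DIM('g)+m)) = 1 \<and> x (DIM('g)+m) \<in> k \<and> (\<forall>a\<in>h. inner (x (DIM('g)+m)) a = 0) \<and>
     (\<forall>i<DIM('g). inner (x (DIM('g)+m)) (x i) = 0)"

lemma frame_exists: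
  fixes br :: "'g::euclidean_space \<Rightarrow> 'g \<Rightarrow> 'g"
  assumes cl: "compact_lie_algebra br" and hs: "subspace h" and ks: "lie_subalgebra br k"
    and hk: "h \<subseteq> k" and uT: "u \<in> Theta br h k"
    and tt: "tt ` {..<m} = max_subalgebras br h k"
    and hb: "onf hb DIM('g)" "span (hb ` {..<DIM('g)}) = h"
  shows "\<exists>x. good br h k tt m hb x (triple br u u (ominus k (osum u h)))"
proof -
  let ?N = "DIM('g)"
  have ksub: "subspace k" using ks unfolding lie_subalgebra_def by simp
  have kbr: "\<And>a b. a \<in> k \<Longrightarrow> b \<in> k \<Longrightarrow> br a b \<in> k" using ks unfolding lie_subalgebra_def by simp
  have lin1: "linear (br a)" for a using cl unfolding compact_lie_algebra_def by blast
  have lin2: "linear (\<lambda>a. br a b)" for b using cl unfolding compact_lie_algebra_def by blast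
  have us: "subspace u" and uinv: "\<And>a y. a \<in> h \<Longrightarrow> y \<in> u \<Longrightarrow> br a y \<in> u"
    and upr: "u \<subset> ominus k h" and umeet: "\<And>s. s \<in> max_subalgebras br h k \<Longrightarrow> u \<inter> ominus k s \<noteq> {0}"
  proof -
    have T: "invariant br h u \<and> u \<subset> ominus k h \<and> (\<forall>s\<in>max_subalgebras br h k. u \<inter> ominus k s \<noteq> {0})"
      using uT unfolding Theta_def by (rule CollectD)
    then show "subspace u" "\<And>a y. a \<in> h \<Longrightarrow> y \<in> u \<Longrightarrow> br a y \<in> u" "u \<subset> ominus k h"
      "\<And>s. s \<in> max_subalgebras br h k \<Longrightarrow> u \<inter> ominus k s \<noteq> {0}"
      unfolding invariant_def by blast+
  qed
  have ukh: "u \<subseteq> ominus k h" using upr by blast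
  have uk: "u \<subseteq> k" using ukh ominus_sub by blast
  have uorth: "\<And>y a. y \<in> u \<Longrightarrow> a \<in> h \<Longrightarrow> inner y a = 0" using ukh unfolding ominus_def by blast
  define B where "B = (SOME B. orthonormal_basis B u)"
  have ob: "orthonormal_basis B u" unfolding B_def using onb_exists[OF us] by (rule someI_ex)
  obtain e where e: "onf e ?N" "e ` {..<?N} \<subseteq> insert 0 B" "B \<subseteq> e ` {..<?N}" "span (e ` {..<?N}) = u"
    using onb_frame[OF ob] by blast
  have PSu: "PS e y = proj u y" for y unfolding PS_def using onf_proj[OF e(1)] e(4) by simp
  have PHh: "PS hb y = proj h y" for y unfolding PS_def using onf_proj[OF hb(1)] hb(2) by simp
  have eu: "e i \<in> u" if "i < ?N" for i using e(4) that span_base[of "e i" "e ` {..<?N}"] by auto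
  obtain x0 where x0: "x0 \<in> ominus k h" "x0 \<notin> u" using upr by blast
  define w0 where "w0 = x0 - proj u x0"
  have w0k: "w0 \<in> ominus k h" unfolding w0_def
    using subspace_diff[OF subspace_ominus[OF ksub] x0(1)] proj_facts(1)[OF us] ukh by blast
  have w0o: "inner w0 y = 0" if "y \<in> u" for y unfolding w0_def using proj_facts(2)[OF us that] .
  have w0n: "w0 \<noteq> 0"
  proof
    assume "w0 = 0" then have "x0 = proj u x0" unfolding w0_def by simp
    then show False using x0(2) proj_facts(1)[OF us, of x0] by simp
  qed
  define w where "w = w0 /\<^sub>R norm w0"
  have wn: "norm w = 1" unfolding w_def using w0n by simp
  have wk: "w \<in> ominus k h" unfolding w_def using subspace_scale[OF subspace_ominus[OF ksub] w0k] by simp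
  have wo: "inner w y = 0" if "y \<in> u" for y unfolding w_def using w0o[OF that] by simp
  have ex: "\<exists>z. z \<in> u \<and> z \<in> ominus k (tt c) \<and> z \<noteq> 0" if "c < m" for c
  proof -
    have "tt c \<in> max_subalgebras br h k" using tt that by blast
    then have "u \<inter> ominus k (tt c) \<noteq> {0}" by (rule umeet)
    moreover have "0 \<in> u \<inter> ominus k (tt c)" using subspace_0[OF us] subspace_0[OF subspace_ominus[OF ksub]] by blast
    ultimately show ?thesis by blast
  qed
  have "\<forall>c. \<exists>z. c < m \<longrightarrow> z \<in> u \<and> z \<in> ominus k (tt c) \<and> z \<noteq> 0" using ex by blast
  then obtain zz where zz: "\<And>c. c < m \<Longrightarrow> zz c \<in> u \<and> zz c \<in> ominus k (tt c) \<and> zz c \<noteq> 0" by metis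
  define v where "v = (\<lambda>c. zz c /\<^sub>R norm (zz c))"
  have vprop: "v c \<in> u" "v c \<in> ominus k (tt c)" "norm (v c) = 1" if "c < m" for c
    using zz[OF that] subspace_scale[OF us] subspace_scale[OF subspace_ominus[OF ksub]] unfolding v_def
    by auto
  define x where "x = (\<lambda>i. if i < ?N then e i else if i < ?N + m then v (i - ?N) else w)"
  have xe: "x i = e i" if "i < ?N" for i using that unfolding x_def by simp
  have PSx: "PS x y = proj u y" for y
  proof -
    have "PS x y = PS e y" unfolding PS_def by (intro sum.cong) (auto simp: xe)
    then show ?thesis using PSu by simp
  qed
  have onfx: "onf x ?N" using e(1) unfolding onf_def by (simp add: xe)
  define q where "q = ominus k (osum u h)"
  have qs: "subspace q" unfolding q_def by (rule subspace_ominus[OF ksub])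
  have tri: "triple br u u q = (\<Sum>a\<in>B. \<Sum>b\<in>B. inner (proj q (br a b)) (proj q (br a b)))"
    unfolding B_def by (rule triple_sym[OF cl us qs])
  have finB: "finite B" using ob unfolding orthonormal_basis_def by simp
  have bound: "norm (proj q (br (e i) (e j)))^2 \<le> triple br u u q" if "i < ?N" "j < ?N" for i j
  proof (cases "e i \<in> B \<and> e j \<in> B")
    case True
    have "norm (proj q (br (e i) (e j)))^2 = inner (proj q (br (e i) (e j))) (proj q (br (e i) (e j)))"
      by (simp add: power2_norm_eq_inner)
    also have "\<dots> \<le> (\<Sum>b\<in>B. inner (proj q (br (e i) b)) (proj q (br (e i) b)))"
      using True finB by (intro member_le_sum) auto
    also have "\<dots> \<le> (\<Sum>a\<in>B. \<Sum>b\<in>B. inner (proj q (br a b)) (proj q (br a b)))"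
      using True finB by (intro member_le_sum[where f = "\<lambda>a. \<Sum>b\<in>B. inner (proj q (br a b)) (proj q (br a b))"] sum_nonneg) auto
    finally show ?thesis using tri by simp
  next
    case False
    then have "e i = 0 \<or> e j = 0" using e(2) that by blast
    then have "br (e i) (e j) = 0" using linear_0[OF lin1] linear_0[OF lin2] by auto
    then have "proj q (br (e i) (e j)) = 0" using proj_zero[OF qs] by simp
    moreover have "0 \<le> triple br u u q" unfolding tri by (intro sum_nonneg) auto
    ultimately show ?thesis by simp
  qed
  have "good br h k tt m hb x (triple br u u q)"
    unfolding good_def
  proof (intro conjI allI impI ballI)
    show "onf x ?N" by (rule onfx)
  next
    fix i assume "i < ?N" then show "x i \<in> k" using eu xe uk by auto
  next
    fix i a assume "i < ?N" "a \<in> h" then show "inner (x i) a = 0" using eu xe uorth by auto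
  next
    fix i a assume "i < ?N" "a \<in> h"
    then have "br a (x i) \<in> u" using eu xe uinv by auto
    then show "br a (x i) = PS x (br a (x i))" unfolding PSx using proj_id[OF us] by simp
  next
    fix i j assume ij: "i < ?N" "j < ?N"
    have "e i \<in> k" "e j \<in> k" using eu[OF ij(1)] eu[OF ij(2)] uk by auto
    then have "br (e i) (e j) \<in> k" by (rule kbr)
    then have "proj q (br (e i) (e j)) = br (e i) (e j) - proj u (br (e i) (e j)) - proj h (br (e i) (e j))"
      unfolding q_def using proj_q[OF ksub hs us hk ukh] by blast
    then show "norm (br (x i) (x j) - PS x (br (x i) (x j)) - PS hb (br (x i) (x j)))^2 \<le> triple br u u q"
      using bound[OF ij] ij by (simp add: xe PSx PHh)
  next
    fix c assume c: "c < m"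
    have xc: "x (?N + c) = v c" unfolding x_def using c by simp
    show "norm (x (?N + c)) = 1" using xc vprop[OF c] by simp
    show "x (?N + c) \<in> k" using xc vprop(2)[OF c] ominus_sub[of k "tt c"] by auto
    show "\<And>a. a \<in> tt c \<Longrightarrow> inner (x (?N + c)) a = 0" using xc vprop(2)[OF c] unfolding ominus_def by auto
    show "x (?N + c) = PS x (x (?N + c))" unfolding PSx xc using proj_id[OF us vprop(1)[OF c]] by simp
  next
    have xm: "x (?N + m) = w" unfolding x_def by simp
    show "norm (x (?N + m)) = 1" using xm wn by simp
    show "x (?N + m) \<in> k" using xm wk ominus_sub[of k h] by auto
    show "\<And>a. a \<in> h \<Longrightarrow> inner (x (?N + m)) a = 0" using xm wk unfolding ominus_def by auto
    show "\<And>i. i < ?N \<Longrightarrow> inner (x (?N + m)) (x i) = 0" using xm wo eu xe by simp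
  qed
  then show ?thesis unfolding q_def by blast
qed

lemma lim_eq: fixes f g :: "nat \<Rightarrow> 'a::t2_space" shows "f \<longlonglongrightarrow> a \<Longrightarrow> g \<longlonglongrightarrow> b \<Longrightarrow> (\<And>n. f n = g n) \<Longrightarrow> a = b"
proof -
  assume a: "f \<longlonglongrightarrow> a" "g \<longlonglongrightarrow> b" "\<And>n. f n = g n"
  have "f = g" using a(3) by (rule ext)
  then have "f \<longlonglongrightarrow> b" using a(2) by simp
  with a(1) show "a = b" by (rule LIMSEQ_unique)
qed

lemma br_bb:
  fixes br :: "'g::euclidean_space \<Rightarrow> 'g \<Rightarrow> 'g"
  assumes cl: "compact_lie_algebra br" shows "bounded_bilinear br"
proof -
  have "(\<forall>x. linear (br x)) \<and> (\<forall>y. linear (\<lambda>x. br x y))" using cl unfolding compact_lie_algebra_def by blast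
  then have "bilinear br" unfolding bilinear_def by simp
  then show ?thesis using bilinear_conv_bounded_bilinear by blast
qed

lemma onf_norm_le:
  assumes "onf x N" "i < N" shows "norm (x i) \<le> 1"
proof -
  have "inner (x i) (x i) = 0 \<or> inner (x i) (x i) = 1" using assms unfolding onf_def by auto
  then show ?thesis by (metis norm_eq_1 norm_eq_zero inner_eq_zero_iff order_refl zero_le_one)
qed

lemma limit_good:
  fixes br :: "'g::euclidean_space \<Rightarrow> 'g \<Rightarrow> 'g"
  assumes cl: "compact_lie_algebra br" and kc: "closed k"
    and X: "\<And>n. good br h k tt m hb (X n) (inverse (real (Suc n)))"
  shows "\<exists>l. good br h k tt m hb l 0"
proof -
  let ?N = "DIM('g)"
  let ?I = "{..<?N + m + 1}"
  interpret bb: bounded_bilinear br by (rule br_bb[OF cl])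
  have nb: "norm (X n i) \<le> 1" if "i \<in> ?I" for n i
  proof -
    have g: "good br h k tt m hb (X n) (inverse (real (Suc n)))" by (rule X)
    show ?thesis
    proof (cases "i < ?N")
      case True then show ?thesis using g onf_norm_le unfolding good_def by blast
    next
      case False
      show ?thesis
      proof (cases "i < ?N + m")
        case True
        then have "i - ?N < m" using False by arith
        then have "norm (X n (?N + (i - ?N))) = 1" using g unfolding good_def by blast
        then show ?thesis using False by simp
      next
        case F2: False
        then have "i = ?N + m" using that by auto
        then show ?thesis using g unfolding good_def by simp
      qed
    qed
  qed
  have "\<forall>d\<subseteq>?I. \<exists>l::nat \<Rightarrow> 'g. \<exists>r::nat\<Rightarrow>nat.
    strict_mono r \<and> (\<forall>e>0. eventually (\<lambda>n. \<forall>i\<in>d. dist (X (r n) i) (l i) < e) sequentially)"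
  proof (rule compact_lemma_general[where unproj = "\<lambda>x. x"])
    show "finite ?I" by simp
    fix i assume "i \<in> ?I"
    then show "bounded ((\<lambda>x. x i) ` range X)"
      unfolding bounded_iff using nb by auto
  qed auto
  then obtain l r where r: "strict_mono r"
    and ev: "\<And>e. e > 0 \<Longrightarrow> eventually (\<lambda>n. \<forall>i\<in>?I. dist (X (r n) i) (l i) < e) sequentially"
    by blast
  define Y where "Y = (\<lambda>n. X (r n))"
  have conv: "(\<lambda>n. Y n i) \<longlonglongrightarrow> l i" if "i \<in> ?I" for i
    unfolding tendsto_iff Y_def
  proof (intro allI impI)
    fix e :: real assume "e > 0"
    then have "eventually (\<lambda>n. \<forall>i\<in>?I. dist (X (r n) i) (l i) < e) sequentially" by (rule ev)
    then show "eventually (\<lambda>n. dist (X (r n) i) (l i) < e) sequentially"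
      by (rule eventually_mono) (use that in blast)
  qed
  have cN: "(\<lambda>n. Y n i) \<longlonglongrightarrow> l i" if "i < ?N" for i using conv that by simp
  have Yg: "good br h k tt m hb (Y n) (inverse (real (Suc (r n))))" for n unfolding Y_def by (rule X)
  have PSc: "(\<lambda>n. PS (Y n) (f n)) \<longlonglongrightarrow> PS l a" if "f \<longlonglongrightarrow> a" for f a
    unfolding PS_def by (intro tendsto_intros that cN) auto
  have PSh: "(\<lambda>n. PS hb (f n)) \<longlonglongrightarrow> PS hb a" if "f \<longlonglongrightarrow> a" for f a
    unfolding PS_def by (intro tendsto_intros that)
  have G1: "onf (Y n) ?N" for n using Yg[of n] unfolding good_def by blast
  have G2: "\<And>i. i < ?N \<Longrightarrow> Y n i \<in> k \<and> (\<forall>a\<in>h. inner (Y n i) a = 0)" for n using Yg[of n] unfolding good_def by blast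
  have G3: "\<And>i a. i < ?N \<Longrightarrow> a \<in> h \<Longrightarrow> br a (Y n i) = PS (Y n) (br a (Y n i))" for n
    using Yg[of n] unfolding good_def by blast
  have G4: "\<And>i j. i < ?N \<Longrightarrow> j < ?N \<Longrightarrow>
     norm (br (Y n i) (Y n j) - PS (Y n) (br (Y n i) (Y n j)) - PS hb (br (Y n i) (Y n j)))^2 \<le> inverse (real (Suc (r n)))" for n
    using Yg[of n] unfolding good_def by blast
  have G5: "\<And>c. c < m \<Longrightarrow> norm (Y n (?N+c)) = 1 \<and> Y n (?N+c) \<in> k \<and> (\<forall>a\<in>tt c. inner (Y n (?N+c)) a = 0)
        \<and> Y n (?N+c) = PS (Y n) (Y n (?N+c))" for n
    using Yg[of n] unfolding good_def by blast
  have G6: "norm (Y n (?N+m)) = 1 \<and> Y n (?N+m) \<in> k \<and> (\<forall>a\<in>h. inner (Y n (?N+m)) a = 0) \<and>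
     (\<forall>i<?N. inner (Y n (?N+m)) (Y n i) = 0)" for n
    using Yg[of n] unfolding good_def by blast
  have cm: "(\<lambda>n. Y n (?N + c)) \<longlonglongrightarrow> l (?N + c)" if "c < m" for c using conv that by simp
  have cw: "(\<lambda>n. Y n (?N + m)) \<longlonglongrightarrow> l (?N + m)" using conv by simp
  have zero: "(\<lambda>n. inverse (real (Suc (r n)))) \<longlonglongrightarrow> 0"
    using LIMSEQ_subseq_LIMSEQ[OF LIMSEQ_inverse_real_of_nat r] by (simp add: o_def)
  have "good br h k tt m hb l 0"
    unfolding good_def
  proof (intro conjI allI impI ballI)
    show "onf l ?N" unfolding onf_def
    proof (intro conjI allI impI)
      fix i j assume ij: "i < ?N" "j < ?N" "i \<noteq> j"
      show "inner (l i) (l j) = 0"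
        by (rule lim_eq[OF tendsto_inner[OF cN[OF ij(1)] cN[OF ij(2)]] tendsto_const])
           (use G1 ij in \<open>auto simp: onf_def\<close>)
    next
      fix i assume i: "i < ?N"
      show "inner (l i) (l i) * (inner (l i) (l i) - 1) = 0"
        by (rule lim_eq[OF tendsto_mult[OF tendsto_inner[OF cN[OF i] cN[OF i]]
               tendsto_diff[OF tendsto_inner[OF cN[OF i] cN[OF i]] tendsto_const]] tendsto_const])
           (use G1 i in \<open>auto simp: onf_def\<close>)
    qed
  next
    fix i assume i: "i < ?N"
    show "l i \<in> k" using closed_sequentially[OF kc _ cN[OF i]] G2[OF i] by blast
  next
    fix i a assume i: "i < ?N" and a: "a \<in> h"
    show "inner (l i) a = 0"
      by (rule lim_eq[OF tendsto_inner[OF cN[OF i] tendsto_const] tendsto_const]) (use G2[OF i] a in blast)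
  next
    fix i a assume i: "i < ?N" and a: "a \<in> h"
    show "br a (l i) = PS l (br a (l i))"
      by (rule lim_eq[OF bb.tendsto[OF tendsto_const cN[OF i]] PSc[OF bb.tendsto[OF tendsto_const cN[OF i]]]])
         (rule G3[OF i a])
  next
    fix i j assume i: "i < ?N" and j: "j < ?N"
    define D where "D = (\<lambda>x::nat\<Rightarrow>'g. br (x i) (x j) - PS x (br (x i) (x j)) - PS hb (br (x i) (x j)))"
    have bc: "(\<lambda>n. br (Y n i) (Y n j)) \<longlonglongrightarrow> br (l i) (l j)" by (rule bb.tendsto[OF cN[OF i] cN[OF j]])
    have Dc: "(\<lambda>n. D (Y n)) \<longlonglongrightarrow> D l" unfolding D_def
      by (intro tendsto_diff bc PSc PSh)
    have "(\<lambda>n. norm (D (Y n))^2) \<longlonglongrightarrow> norm (D l)^2" by (intro tendsto_intros Dc)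
    moreover have "(\<lambda>n. norm (D (Y n))^2) \<longlonglongrightarrow> 0"
    proof (rule tendsto_sandwich[OF _ _ tendsto_const zero])
      show "eventually (\<lambda>n. 0 \<le> norm (D (Y n))^2) sequentially" by simp
      show "eventually (\<lambda>n. norm (D (Y n))^2 \<le> inverse (real (Suc (r n)))) sequentially"
        unfolding D_def using G4[OF i j] by simp
    qed
    ultimately have "norm (D l)^2 = 0" by (rule LIMSEQ_unique)
    then show "norm (br (l i) (l j) - PS l (br (l i) (l j)) - PS hb (br (l i) (l j)))^2 \<le> 0"
      unfolding D_def by simp
  next
    fix c assume c: "c < m"
    show "norm (l (?N + c)) = 1"
      by (rule lim_eq[OF tendsto_norm[OF cm[OF c]] tendsto_const]) (use G5[OF c] in blast)
    show "l (?N + c) \<in> k" using closed_sequentially[OF kc _ cm[OF c]] G5[OF c] by blast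
    show "\<And>a. a \<in> tt c \<Longrightarrow> inner (l (?N + c)) a = 0"
      by (rule lim_eq[OF tendsto_inner[OF cm[OF c] tendsto_const] tendsto_const]) (use G5[OF c] in blast)
    show "l (?N + c) = PS l (l (?N + c))"
      by (rule lim_eq[OF cm[OF c] PSc[OF cm[OF c]]]) (use G5[OF c] in blast)
  next
    show "norm (l (?N + m)) = 1"
      by (rule lim_eq[OF tendsto_norm[OF cw] tendsto_const]) (use G6 in blast)
    show "l (?N + m) \<in> k" using closed_sequentially[OF kc _ cw] G6 by blast
    show "\<And>a. a \<in> h \<Longrightarrow> inner (l (?N + m)) a = 0"
      by (rule lim_eq[OF tendsto_inner[OF cw tendsto_const] tendsto_const]) (use G6 in blast)
    show "\<And>i. i < ?N \<Longrightarrow> inner (l (?N + m)) (l i) = 0"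
      by (rule lim_eq[OF tendsto_inner[OF cw cN] tendsto_const]) (use G6 in blast)+
  qed
  then show ?thesis by blast
qed

lemma subspace_vimage_lin:
  fixes f :: "'a::real_vector \<Rightarrow> 'b::real_vector"
  assumes "linear f" "subspace S" shows "subspace (f -` S)"
  using assms unfolding subspace_def
  by (simp add: linear_0 linear_add linear_scale)

lemma max_exists:
  fixes br :: "'g::euclidean_space \<Rightarrow> 'g \<Rightarrow> 'g"
  assumes s: "lie_subalgebra br s" and hs: "h \<subset> s" and sk: "s \<subset> k"
  shows "\<exists>t\<in>max_subalgebras br h k. s \<subseteq> t"
proof -
  let ?P = "\<lambda>t. lie_subalgebra br t \<and> s \<subseteq> t \<and> t \<subset> k"
  have "?P s" using s sk by simp
  moreover have "\<forall>y. ?P y \<longrightarrow> dim y < DIM('g) + 1"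
    using dim_subset_UNIV by (metis less_Suc_eq_le Suc_eq_plus1)
  ultimately obtain t where t: "?P t" and tmax: "\<And>y. ?P y \<Longrightarrow> dim y \<le> dim t"
    using ex_has_greatest_nat[of ?P s dim "DIM('g) + 1"] by blast
  have "t \<in> max_subalgebras br h k" unfolding max_subalgebras_def
  proof (intro CollectI conjI allI impI)
    show "lie_subalgebra br t" "t \<subset> k" using t by auto
    show "h \<subset> t" using hs t by blast
    fix t' assume t': "lie_subalgebra br t' \<and> t \<subseteq> t' \<and> t' \<subset> k"
    then have "?P t'" using t by blast
    then have "dim t' \<le> dim t" by (rule tmax)
    moreover have "subspace t" "subspace t'" using t t' unfolding lie_subalgebra_def by auto
    ultimately show "t' = t" using subspace_dim_equal[of t t'] t' by auto
  qed
  then show ?thesis using t by blast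
qed

lemma good_mono: "good br h k tt m hb x e \<Longrightarrow> e \<le> e' \<Longrightarrow> good br h k tt m hb x e'"
  unfolding good_def by (meson order_trans)

lemma no_good0:
  fixes br :: "'g::euclidean_space \<Rightarrow> 'g \<Rightarrow> 'g"
  assumes cl: "compact_lie_algebra br" and hl: "lie_subalgebra br h" and ks: "lie_subalgebra br k"
    and hk: "h \<subseteq> k" and tt: "tt ` {..<m} = max_subalgebras br h k" and m: "m > 0"
    and hb: "onf hb DIM('g)" "span (hb ` {..<DIM('g)}) = h"
    and g: "good br h k tt m hb l 0"
  shows False
proof -
  let ?N = "DIM('g)"
  define U where "U = span (l ` {..<?N})"
  have Us: "subspace U" unfolding U_def by simp
  have hs: "subspace h" using hl unfolding lie_subalgebra_def by simp
  have ksub: "subspace k" using ks unfolding lie_subalgebra_def by simp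
  have kbr: "\<And>a b. a \<in> k \<Longrightarrow> b \<in> k \<Longrightarrow> br a b \<in> k" using ks unfolding lie_subalgebra_def by simp
  have hbr: "\<And>a b. a \<in> h \<Longrightarrow> b \<in> h \<Longrightarrow> br a b \<in> h" using hl unfolding lie_subalgebra_def by simp
  have lin1: "linear (br a)" for a using cl unfolding compact_lie_algebra_def by blast
  have lin2: "linear (\<lambda>a. br a b)" for b using cl unfolding compact_lie_algebra_def by blast
  have anti: "br a b = - br b a" for a b using cl unfolding compact_lie_algebra_def by blast
  interpret bb: bounded_bilinear br by (rule br_bb[OF cl])
  have onfl: "onf l ?N" using g unfolding good_def by blast
  have PSU: "PS l y \<in> U" for y unfolding PS_def U_def by (intro span_sum span_scale span_base) auto
  have PSH: "PS hb y \<in> h" for y unfolding PS_def hb(2)[symmetric] by (intro span_sum span_scale span_base) auto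
  have lkh: "l i \<in> ominus k h" if "i < ?N" for i using g that unfolding good_def ominus_def by blast
  have Ukh: "U \<subseteq> ominus k h" unfolding U_def using lkh subspace_ominus[OF ksub]
    by (intro span_minimal) auto
  have Uk: "U \<subseteq> k" using Ukh ominus_sub by blast
  have Uh: "inner a b = 0" if "a \<in> U" "b \<in> h" for a b using Ukh that unfolding ominus_def by blast
  have inv: "br a z \<in> U" if a: "a \<in> h" and z: "z \<in> U" for a z
  proof -
    have "U \<subseteq> br a -` U" unfolding U_def
    proof (rule span_minimal)
      show "subspace (br a -` span (l ` {..<?N}))" by (rule subspace_vimage_lin[OF lin1]) simp
      show "l ` {..<?N} \<subseteq> br a -` span (l ` {..<?N})"
      proof
        fix y assume "y \<in> l ` {..<?N}"
        then obtain i where i: "i < ?N" "y = l i" by auto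
        have "br a (l i) = PS l (br a (l i))" using g i a unfolding good_def by blast
        then show "y \<in> br a -` span (l ` {..<?N})" using PSU[of "br a (l i)"] i unfolding U_def by simp
      qed
    qed
    then show ?thesis using z by blast
  qed
  define s where "s = osum U h"
  have ss: "subspace s" unfolding s_def by (rule osum_subspace[OF Us hs])
  have Us': "U \<subseteq> s"
  proof
    fix x assume "x \<in> U"
    moreover have "(0::'g) \<in> h" using subspace_0[OF hs] .
    ultimately have "x + 0 \<in> s" unfolding s_def osum_def by blast
    then show "x \<in> s" by simp
  qed
  have hs': "h \<subseteq> s"
  proof
    fix x assume "x \<in> h"
    moreover have "(0::'g) \<in> U" using subspace_0[OF Us] .
    ultimately have "0 + x \<in> s" unfolding s_def osum_def by blast
    then show "x \<in> s" by simp
  qed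
  have gen: "br (l i) (l j) \<in> s" if "i < ?N" "j < ?N" for i j
  proof -
    let ?Y = "br (l i) (l j)"
    have "norm (?Y - PS l ?Y - PS hb ?Y)^2 \<le> 0" using g that unfolding good_def by blast
    then have "?Y - PS l ?Y - PS hb ?Y = 0" by simp
    then have "?Y = PS l ?Y + PS hb ?Y" by (simp add: algebra_simps)
    then show ?thesis unfolding s_def osum_def using PSU PSH by blast
  qed
  have br1: "br (l i) w \<in> s" if i: "i < ?N" and w: "w \<in> U" for i w
  proof -
    have "U \<subseteq> br (l i) -` s" unfolding U_def
      by (rule span_minimal) (use gen i in \<open>auto intro: subspace_vimage_lin[OF lin1 ss]\<close>)
    then show ?thesis using w by blast
  qed
  have brU: "br z w \<in> s" if z: "z \<in> U" and w: "w \<in> U" for z w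
  proof -
    have "U \<subseteq> (\<lambda>z. br z w) -` s" unfolding U_def
      by (rule span_minimal) (use br1 w in \<open>auto intro: subspace_vimage_lin[OF lin2 ss]\<close>)
    then show ?thesis using z by blast
  qed
  have sl: "lie_subalgebra br s" unfolding lie_subalgebra_def
  proof (intro conjI ss ballI)
    fix x y assume "x \<in> s" "y \<in> s"
    then obtain x1 x2 y1 y2 where xy: "x = x1 + x2" "y = y1 + y2" "x1 \<in> U" "x2 \<in> h" "y1 \<in> U" "y2 \<in> h"
      unfolding s_def osum_def by blast
    have e: "br x y = br x1 y1 + br x1 y2 + (br x2 y1 + br x2 y2)"
      unfolding xy by (simp add: bb.add_left bb.add_right)
    have "br x1 y2 = - br y2 x1" by (rule anti)
    then have a2: "br x1 y2 \<in> s" using inv[OF xy(6) xy(3)] Us' subspace_neg[OF ss] by auto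
    have a3: "br x2 y1 \<in> s" using inv[OF xy(4) xy(5)] Us' by blast
    have a4: "br x2 y2 \<in> s" using hbr[OF xy(4) xy(6)] hs' by blast
    have a1: "br x1 y1 \<in> s" by (rule brU[OF xy(3) xy(5)])
    show "br x y \<in> s" unfolding e using a1 a2 a3 a4 ss by (simp add: subspace_add)
  qed
  have v0: "norm (l (?N + 0)) = 1 \<and> l (?N + 0) \<in> k \<and> (\<forall>a\<in>tt 0. inner (l (?N + 0)) a = 0)
        \<and> l (?N + 0) = PS l (l (?N + 0))" using g m unfolding good_def by blast
  have v0U: "l ?N \<in> U" using v0 PSU by (metis add_0_right)
  have hps: "h \<subset> s"
  proof
    show "h \<subseteq> s" by (rule hs')
    show "h \<noteq> s"
    proof
      assume "h = s"
      then have "l ?N \<in> h" using v0U Us' by blast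
      then have "inner (l ?N) (l ?N) = 0" using Uh v0U by blast
      then show False using v0 by simp
    qed
  qed
  have wp: "norm (l (?N + m)) = 1 \<and> l (?N + m) \<in> k \<and> (\<forall>a\<in>h. inner (l (?N + m)) a = 0) \<and>
     (\<forall>i<?N. inner (l (?N + m)) (l i) = 0)" using g unfolding good_def by blast
  have wU: "inner (l (?N + m)) a = 0" if "a \<in> U" for a
  proof -
    have "orthogonal (l (?N + m)) a"
      by (rule orthogonal_to_span[of a "l ` {..<?N}"]) (use that wp in \<open>auto simp: U_def orthogonal_def\<close>)
    then show ?thesis by (simp add: orthogonal_def)
  qed
  have spk: "s \<subset> k"
  proof
    show "s \<subseteq> k"
    proof
      fix x assume "x \<in> s"
      then obtain a b where "x = a + b" "a \<in> U" "b \<in> h" unfolding s_def osum_def by blast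
      then show "x \<in> k" using Uk hk ksub by (metis subsetD subspace_add)
    qed
    show "s \<noteq> k"
    proof
      assume "s = k"
      then have "l (?N + m) \<in> s" using wp by blast
      then obtain a b where ab: "l (?N + m) = a + b" "a \<in> U" "b \<in> h" unfolding s_def osum_def by blast
      have "inner (l (?N + m)) (l (?N + m)) = inner (l (?N + m)) a + inner (l (?N + m)) b"
        by (simp add: ab(1)[symmetric] inner_add_right[symmetric])
      also have "\<dots> = 0" using wU[OF ab(2)] wp ab(3) by simp
      finally show False using wp by simp
    qed
  qed
  obtain t where t: "t \<in> max_subalgebras br h k" "s \<subseteq> t" using max_exists[OF sl hps spk] by blast
  then obtain c where c: "c < m" "t = tt c" using tt by (metis imageE lessThan_iff)
  have vc: "norm (l (?N + c)) = 1 \<and> (\<forall>a\<in>tt c. inner (l (?N + c)) a = 0)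
        \<and> l (?N + c) = PS l (l (?N + c))" using g c unfolding good_def by blast
  have "l (?N + c) \<in> t" using vc PSU[of "l (?N + c)"] Us' t(2) by (metis subsetD)
  then have "inner (l (?N + c)) (l (?N + c)) = 0" using vc c by blast
  then show False using vc by simp
qed

theorem mainTheorem15:
  fixes br :: "'g::euclidean_space \<Rightarrow> 'g \<Rightarrow> 'g" and h k :: "'g set"
  assumes "compact_lie_algebra br"
    and "lie_subalgebra br h"
    and "dim h + 3 \<le> DIM('g)"
    and "hypothesis_H br h"
    and "lie_subalgebra br k" and "h \<subset> k"
    and "finite (max_subalgebras br h k)" and "max_subalgebras br h k \<noteq> {}"
  shows "theta br h k > 0"
proof -
  note cl = assms(1) and hl = assms(2) and ks = assms(5) and hk = assms(6)
  have hs: "subspace h" using hl unfolding lie_subalgebra_def by simp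
  have ksub: "subspace k" using ks unfolding lie_subalgebra_def by simp
  have kc: "closed k" by (rule closed_subspace[OF ksub])
  have hk': "h \<subseteq> k" using hk by blast
  obtain tt where ttb: "bij_betw tt {0..<card (max_subalgebras br h k)} (max_subalgebras br h k)"
    using ex_bij_betw_nat_finite[OF assms(7)] by blast
  define m where "m = card (max_subalgebras br h k)"
  have tt: "tt ` {..<m} = max_subalgebras br h k"
    using bij_betw_imp_surj_on[OF ttb] unfolding m_def by (simp add: atLeast0LessThan)
  have m: "m > 0" unfolding m_def using assms(7,8) by (simp add: card_gt_0_iff)
  obtain Bh where "orthonormal_basis Bh h" using onb_exists[OF hs] by blast
  then obtain hb where hb: "onf hb DIM('g)" "span (hb ` {..<DIM('g)}) = h"
    using onb_frame by blast
  show ?thesis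
  proof (cases "Theta br h k = {}")
    case True then show ?thesis unfolding theta_def by simp
  next
    case False
    define S where "S = {triple br u u (ominus k (osum u h)) | u. u \<in> Theta br h k}"
    have Sne: "S \<noteq> {}" unfolding S_def using False by blast
    have nonneg: "0 \<le> triple br u v w" for u v w
      unfolding triple_def by (intro sum_nonneg) auto
    have "Inf S > 0"
    proof (rule ccontr)
      assume "\<not> Inf S > 0"
      then have le: "Inf S \<le> 0" by simp
      have "\<exists>x. good br h k tt m hb x (inverse (real (Suc n)))" for n
      proof -
        have "Inf S < inverse (real (Suc n))" using le
          by (metis dual_order.strict_trans2 inverse_positive_iff_positive of_nat_0_less_iff zero_less_Suc)
        then obtain y where "y \<in> S" "y < inverse (real (Suc n))" using cInf_lessD[OF Sne] by blast
        then obtain u where u: "u \<in> Theta br h k" "triple br u u (ominus k (osum u h)) < inverse (real (Suc n))"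
          unfolding S_def by blast
        obtain x where "good br h k tt m hb x (triple br u u (ominus k (osum u h)))"
          using frame_exists[OF cl hs ks hk' u(1) tt hb] by blast
        then have "good br h k tt m hb x (inverse (real (Suc n)))"
          by (rule good_mono) (use u(2) in simp)
        then show ?thesis by blast
      qed
      then obtain X where "\<And>n. good br h k tt m hb (X n) (inverse (real (Suc n)))" by metis
      then obtain l where "good br h k tt m hb l 0" using limit_good[OF cl kc] by blast
      then show False using no_good0[OF cl hl ks hk' tt m hb] by blast
    qed
    then show ?thesis unfolding theta_def S_def using False by simp
  qed
qed

end
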